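(* Let $T$ be a locally finite tree, $G\leq\mathrm{Aut}(T)$ a closed subgroup, $g\in G$ hyperbolic and $x\in\partial T$ the attracting fixed point of $g$. The following are equivalent: (i) $G_x$ is open in $G$; (ii) there is a compact open subgroup $K\leq G$ with $g^nKg^{-n}\supseteq K$ for all $n\in\mathbb{N}$; (iii) there is a compact open subgroup $K\leq G$ such that $[K:K\cap g^nKg^{-n}]$, $n\in\mathbb{N}$, is bounded; (iv) for all compact open subgroups $K\leq G$ the sequence $[K:K\cap g^nKg^{-n}]$, $n\in\mathbb{N}$, is bounded.
   Context: $\mathrm{Aut}(T)$ has the topology of pointwise convergence. A hyperbolic automorphism fixes no vertex or edge; it fixes exactly two boundary points and translates along the geodesic axis between them; the attracting fixed point is the one toward which it translates. *)

theory Defs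
  imports "HOL-Analysis.Analysis" "HOL-Algebra.Coset"
begin

definition is_walk :: "('v \<Rightarrow> 'v \<Rightarrow> bool) \<Rightarrow> 'v list \<Rightarrow> bool" where
  "is_walk E xs \<longleftrightarrow> (\<forall>i. Suc i < length xs \<longrightarrow> E (xs ! i) (xs ! Suc i))"

definition non_backtracking :: "'v list \<Rightarrow> bool" where
  "non_backtracking xs \<longleftrightarrow> (\<forall>i. Suc (Suc i) < length xs \<longrightarrow> xs ! i \<noteq> xs ! Suc (Suc i))"

definition is_tree :: "('v \<Rightarrow> 'v \<Rightarrow> bool) \<Rightarrow> bool" where
  "is_tree E \<longleftrightarrow>
     (\<forall>u v. E u v \<longrightarrow> E v u) \<and> (\<forall>v. \<not> E v v) \<and>
     (\<forall>u v. (u, v) \<in> {(a, b). E a b}\<^sup>*) \<and>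
     (\<forall>xs. length xs \<ge> 2 \<and> is_walk E xs \<and> non_backtracking xs \<longrightarrow> hd xs \<noteq> last xs)"

definition locally_finite :: "('v \<Rightarrow> 'v \<Rightarrow> bool) \<Rightarrow> bool" where
  "locally_finite E \<longleftrightarrow> (\<forall>v. finite {u. E v u})"

definition tree_aut :: "('v \<Rightarrow> 'v \<Rightarrow> bool) \<Rightarrow> ('v \<Rightarrow> 'v) \<Rightarrow> bool" where
  "tree_aut E f \<longleftrightarrow> bij f \<and> (\<forall>u v. E (f u) (f v) \<longleftrightarrow> E u v)"

definition aut_group :: "('v \<Rightarrow> 'v \<Rightarrow> bool) \<Rightarrow> ('v \<Rightarrow> 'v) monoid" where
  "aut_group E = \<lparr>carrier = {f. tree_aut E f}, mult = (\<circ>), one = id\<rparr>"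

definition pw_top :: "('v \<Rightarrow> 'v) topology" where
  "pw_top = product_topology (\<lambda>_. discrete_topology UNIV) UNIV"

definition aut_top :: "('v \<Rightarrow> 'v \<Rightarrow> bool) \<Rightarrow> ('v \<Rightarrow> 'v) topology" where
  "aut_top E = subtopology pw_top (carrier (aut_group E))"

definition closed_subgroup :: "('v \<Rightarrow> 'v \<Rightarrow> bool) \<Rightarrow> ('v \<Rightarrow> 'v) set \<Rightarrow> bool" where
  "closed_subgroup E G \<longleftrightarrow> subgroup G (aut_group E) \<and> closedin (aut_top E) G"

definition compact_open_subgroup ::
  "('v \<Rightarrow> 'v \<Rightarrow> bool) \<Rightarrow> ('v \<Rightarrow> 'v) set \<Rightarrow> ('v \<Rightarrow> 'v) set \<Rightarrow> bool" where
  "compact_open_subgroup E G K \<longleftrightarrow>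
     subgroup K (aut_group E) \<and> K \<subseteq> G \<and> compactin (aut_top E) K \<and>
     openin (subtopology (aut_top E) G) K"

definition hyperbolic :: "('v \<Rightarrow> 'v \<Rightarrow> bool) \<Rightarrow> ('v \<Rightarrow> 'v) \<Rightarrow> bool" where
  "hyperbolic E g \<longleftrightarrow> tree_aut E g \<and> (\<forall>v. g v \<noteq> v) \<and>
     \<not> (\<exists>u v. E u v \<and> g u = v \<and> g v = u)"

definition is_ray :: "('v \<Rightarrow> 'v \<Rightarrow> bool) \<Rightarrow> (nat \<Rightarrow> 'v) \<Rightarrow> bool" where
  "is_ray E r \<longleftrightarrow> (\<forall>n. E (r n) (r (Suc n))) \<and> (\<forall>n. r n \<noteq> r (Suc (Suc n)))"

definition ray_class :: "('v \<Rightarrow> 'v \<Rightarrow> bool) \<Rightarrow> (nat \<Rightarrow> 'v) \<Rightarrow> (nat \<Rightarrow> 'v) set" where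
  "ray_class E r = {s. is_ray E s \<and> (\<exists>k m. \<forall>n. s (n + k) = r (n + m))}"

definition tree_ends :: "('v \<Rightarrow> 'v \<Rightarrow> bool) \<Rightarrow> (nat \<Rightarrow> 'v) set set" where
  "tree_ends E = {ray_class E r | r. is_ray E r}"

definition end_action :: "('v \<Rightarrow> 'v) \<Rightarrow> (nat \<Rightarrow> 'v) set \<Rightarrow> (nat \<Rightarrow> 'v) set" where
  "end_action h \<xi> = (\<lambda>r. h \<circ> r) ` \<xi>"

definition end_stabilizer ::
  "('v \<Rightarrow> 'v) set \<Rightarrow> (nat \<Rightarrow> 'v) set \<Rightarrow> ('v \<Rightarrow> 'v) set" where
  "end_stabilizer G \<xi> = {h \<in> G. end_action h \<xi> = \<xi>}"

definition attracting_end ::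
  "('v \<Rightarrow> 'v \<Rightarrow> bool) \<Rightarrow> ('v \<Rightarrow> 'v) \<Rightarrow> (nat \<Rightarrow> 'v) set \<Rightarrow> bool" where
  "attracting_end E g \<xi> \<longleftrightarrow>
     (\<exists>r k. is_ray E r \<and> \<xi> = ray_class E r \<and> k > 0 \<and> (\<forall>n. g (r n) = r (n + k)))"

definition conj_pow ::
  "('v \<Rightarrow> 'v \<Rightarrow> bool) \<Rightarrow> ('v \<Rightarrow> 'v) \<Rightarrow> nat \<Rightarrow> ('v \<Rightarrow> 'v) set \<Rightarrow> ('v \<Rightarrow> 'v) set" where
  "conj_pow E g n K =
     (\<lambda>k. (g [^]\<^bsub>aut_group E\<^esub> n) \<otimes>\<^bsub>aut_group E\<^esub> k \<otimes>\<^bsub>aut_group E\<^esub>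
          inv\<^bsub>aut_group E\<^esub> (g [^]\<^bsub>aut_group E\<^esub> n)) ` K"

definition sg_index ::
  "('v \<Rightarrow> 'v \<Rightarrow> bool) \<Rightarrow> ('v \<Rightarrow> 'v) set \<Rightarrow> ('v \<Rightarrow> 'v) set \<Rightarrow> nat" where
  "sg_index E K H = card (rcosets\<^bsub>(aut_group E)\<lparr>carrier := K\<rparr>\<^esub> H)"

end

theory Submission
  imports Defs
begin

abbreviation hinv :: "('a \<Rightarrow> 'b) \<Rightarrow> 'b \<Rightarrow> 'a" where "hinv f \<equiv> inv_into UNIV f"

lemma tree_aut_inv: "tree_aut E f \<Longrightarrow> tree_aut E (hinv f)"
  unfolding tree_aut_def
proof safe
  assume b: "bij f" and e: "\<forall>u v. E (f u) (f v) = E u v"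
  show "bij (hinv f)" using b by (simp add: bij_imp_bij_inv)
  fix u v
  have s: "f (hinv f w) = w" for w using b by (meson bij_inv_eq_iff)
  show "E (hinv f u) (hinv f v) \<Longrightarrow> E u v" using e s by metis
  show "E u v \<Longrightarrow> E (hinv f u) (hinv f v)" using e s by metis
qed

lemma tree_aut_comp: "tree_aut E f \<Longrightarrow> tree_aut E h \<Longrightarrow> tree_aut E (f \<circ> h)"
  unfolding tree_aut_def by (auto simp: bij_comp)

lemma tree_aut_id: "tree_aut E id"
  unfolding tree_aut_def by auto

lemma aut_carrier[simp]: "carrier (aut_group E) = {f. tree_aut E f}"
  and aut_mult[simp]: "mult (aut_group E) = (\<circ>)"
  and aut_one[simp]: "one (aut_group E) = id"
  by (simp_all add: aut_group_def)

lemma inv_comp_self[simp]: "tree_aut E f \<Longrightarrow> hinv f (f u) = u"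
  by (meson bij_def inv_f_f tree_aut_def)
lemma comp_inv_self[simp]: "tree_aut E f \<Longrightarrow> f (hinv f u) = u"
  by (meson bij_inv_eq_iff tree_aut_def)

lemma aut_group: "group (aut_group E)"
proof (rule groupI)
  fix x assume "x \<in> carrier (aut_group E)"
  then have tx: "tree_aut E x" by simp
  then have t: "tree_aut E (hinv x)" by (rule tree_aut_inv)
  have "hinv x \<circ> x = id" using tx by (auto simp: fun_eq_iff)
  then have "hinv x \<in> carrier (aut_group E)" "hinv x \<otimes>\<^bsub>aut_group E\<^esub> x = \<one>\<^bsub>aut_group E\<^esub>"
    using t by auto
  then show "\<exists>y\<in>carrier (aut_group E). y \<otimes>\<^bsub>aut_group E\<^esub> x = \<one>\<^bsub>aut_group E\<^esub>" by blast
qed (auto simp: tree_aut_comp tree_aut_id comp_assoc)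

lemma aut_inv[simp]: "tree_aut E f \<Longrightarrow> inv\<^bsub>aut_group E\<^esub> f = hinv f"
proof -
  assume a: "tree_aut E f"
  have "hinv f \<circ> f = id"
    using a by (auto simp: fun_eq_iff)
  then show ?thesis using group.inv_equality[OF aut_group[of E], where x=f and y="hinv f"] a tree_aut_inv[OF a] by simp
qed

lemma aut_pow[simp]: "g [^]\<^bsub>aut_group E\<^esub> (n::nat) = g ^^ n"
  by (induction n) (simp_all del: funpow.simps add: funpow_Suc_right)

lemma tree_aut_pow: "tree_aut E g \<Longrightarrow> tree_aut E (g ^^ n)"
  by (induction n) (auto simp: tree_aut_id tree_aut_comp)

lemma tree_aut_bij: "tree_aut E f \<Longrightarrow> bij f" by (simp add: tree_aut_def)
lemma tree_aut_adj: "tree_aut E f \<Longrightarrow> E (f u) (f v) = E u v" by (simp add: tree_aut_def)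

lemma conj_pow_eq: "tree_aut E g \<Longrightarrow>
   conj_pow E g n K = (\<lambda>k. (g ^^ n) \<circ> k \<circ> hinv (g ^^ n)) ` K"
  by (simp add: conj_pow_def tree_aut_pow)

lemma sg_index_eq: "sg_index E K H = card ((\<lambda>a. (\<lambda>h. h \<circ> a) ` H) ` K)"
  unfolding sg_index_def RCOSETS_def r_coset_def
  by (simp add: aut_group_def UNION_singleton_eq_range)

lemma subgroupD:
  assumes "subgroup H (aut_group E)"
  shows "H \<subseteq> {f. tree_aut E f}" "id \<in> H" "\<And>a b. a \<in> H \<Longrightarrow> b \<in> H \<Longrightarrow> a \<circ> b \<in> H"
    "\<And>a. a \<in> H \<Longrightarrow> hinv a \<in> H"
proof -
  show 1: "H \<subseteq> {f. tree_aut E f}" using subgroup.subset[OF assms] by simp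
  show "id \<in> H" using subgroup.one_closed[OF assms] by simp
  show "\<And>a b. a \<in> H \<Longrightarrow> b \<in> H \<Longrightarrow> a \<circ> b \<in> H" using subgroup.m_closed[OF assms] by simp
  show "\<And>a. a \<in> H \<Longrightarrow> hinv a \<in> H"
  proof -
    fix a assume a: "a \<in> H"
    then have "tree_aut E a" using 1 by auto
    then show "hinv a \<in> H" using subgroup.m_inv_closed[OF assms a] aut_inv by metis
  qed
qed

lemma subgroupI_aut:
  assumes "H \<subseteq> {f. tree_aut E f}" "id \<in> H" "\<And>a b. a \<in> H \<Longrightarrow> b \<in> H \<Longrightarrow> a \<circ> b \<in> H"
    "\<And>a. a \<in> H \<Longrightarrow> hinv a \<in> H"
  shows "subgroup H (aut_group E)"
  apply (rule subgroup.intro)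
  using assms by (auto simp: subset_iff)

definition fwalk :: "('v \<Rightarrow> 'v \<Rightarrow> bool) \<Rightarrow> (nat \<Rightarrow> 'v) \<Rightarrow> nat \<Rightarrow> bool" where
  "fwalk E f m \<longleftrightarrow> (\<forall>i<m. E (f i) (f (Suc i)))"
definition fnb :: "(nat \<Rightarrow> 'v) \<Rightarrow> nat \<Rightarrow> bool" where
  "fnb f m \<longleftrightarrow> (\<forall>i. i + 2 \<le> m \<longrightarrow> f i \<noteq> f (i + 2))"

lemma tree_sym: "is_tree E \<Longrightarrow> E u v \<Longrightarrow> E v u" by (simp add: is_tree_def)
lemma tree_irrefl: "is_tree E \<Longrightarrow> \<not> E v v" by (simp add: is_tree_def)

lemma tree_no_cycle:
  assumes t: "is_tree E" and n: "n \<ge> 1" and w: "fwalk E F n" and b: "fnb F n"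
  shows "F 0 \<noteq> F n"
proof -
  let ?L = "map F [0..<Suc n]"
  have "is_walk E ?L" using w unfolding is_walk_def fwalk_def
    by (auto simp del: upt_Suc simp: nth_map_upt)
  moreover have "non_backtracking ?L" using b unfolding non_backtracking_def fnb_def
    by (auto simp del: upt_Suc simp: nth_map_upt)
  moreover have "length ?L \<ge> 2" using n by simp
  ultimately have "hd ?L \<noteq> last ?L" using t unfolding is_tree_def by blast
  moreover have "hd ?L = F 0" by (simp del: upt_Suc add: hd_map hd_upt)
  moreover have "last ?L = F n" by (simp add: last_map del: upt_Suc)
  ultimately show ?thesis by simp
qed

lemma closed_contra:
  assumes t: "is_tree E" and mm: "m + m' \<ge> 1"
    and d: "m = 0 \<or> m' = 0 \<or> f (m - 1) \<noteq> f' (m' - 1)"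
    and w: "fwalk E f m" "fnb f m" and w': "fwalk E f' m'" "fnb f' m'"
    and e0: "f 0 = f' 0" and e1: "f m = f' m'"
  shows False
proof -
  define F where "F i = (if i \<le> m then f i else f' (m + m' - i))" for i
  have "fwalk E F (m + m')" unfolding fwalk_def
  proof (intro allI impI)
    fix i assume i: "i < m + m'"
    show "E (F i) (F (Suc i))"
    proof (cases "Suc i \<le> m")
      case True then show ?thesis using w(1) by (simp add: F_def fwalk_def)
    next
      case False
      show ?thesis
      proof (cases "i = m")
        case True
        then have "F i = f' m'" "F (Suc i) = f' (m' - 1)" "m' \<ge> 1" using e1 i by (auto simp: F_def)
        moreover have "E (f' (m' - 1)) (f' m')"
        proof -
          obtain j where "m' = Suc j" using \<open>m' \<ge> 1\<close> by (cases m') auto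
          then show ?thesis using w'(1) by (simp add: fwalk_def)
        qed
        ultimately show ?thesis using tree_sym[OF t] by simp
      next
        case False
        then have "i > m" using \<open>\<not> Suc i \<le> m\<close> by simp
        then have "F i = f' (Suc (m + m' - Suc i))" "F (Suc i) = f' (m + m' - Suc i)"
          using i by (auto simp: F_def Suc_diff_Suc)
        moreover have "E (f' (m + m' - Suc i)) (f' (Suc (m + m' - Suc i)))"
          using w'(1) i \<open>i > m\<close> by (simp add: fwalk_def)
        ultimately show ?thesis using tree_sym[OF t] by simp
      qed
    qed
  qed
  moreover have "fnb F (m + m')" unfolding fnb_def
  proof (intro allI impI)
    fix i assume i: "i + 2 \<le> m + m'"
    consider "i + 2 \<le> m" | "i + 1 = m" | "i = m" | "i > m" by linarith
    then show "F i \<noteq> F (i + 2)"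
    proof cases
      case 1 then show ?thesis using w(2) by (simp add: F_def fnb_def)
    next
      case 2
      then have "F i = f (m - 1)" "F (i+2) = f' (m' - 1)" "m \<ge> 1" "m' \<ge> 1" using i by (auto simp: F_def)
      then show ?thesis using d by auto
    next
      case 3
      then have "F i = f' m'" "F (i+2) = f' (m' - 2)" "m' \<ge> 2" using i e1 by (auto simp: F_def)
      moreover have "f' (m' - 2) \<noteq> f' (m' - 2 + 2)" using w'(2) \<open>m' \<ge> 2\<close> by (simp add: fnb_def)
      moreover have "m' - 2 + 2 = m'" using \<open>m' \<ge> 2\<close> by simp
      ultimately show ?thesis by metis
    next
      case 4
      moreover have "m + m' - i = (m + m' - (i + 2)) + 2" using i by simp
      ultimately have "F i = f' ((m + m' - (i + 2)) + 2)" "F (i+2) = f' (m + m' - (i + 2))" using i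
        by (auto simp: F_def)
      moreover have "f' (m + m' - (i + 2)) \<noteq> f' ((m + m' - (i + 2)) + 2)" using w'(2) i 4
        by (simp add: fnb_def)
      ultimately show ?thesis by simp
    qed
  qed
  ultimately have "F 0 \<noteq> F (m + m')" using tree_no_cycle[OF t mm] by blast
  moreover have "F 0 = F (m + m')" using e0 e1 by (auto simp: F_def)
  ultimately show False by simp
qed

lemma fwalk_mono: "fwalk E f m \<Longrightarrow> k \<le> m \<Longrightarrow> fwalk E f k" by (simp add: fwalk_def)
lemma fnb_mono: "fnb f m \<Longrightarrow> k \<le> m \<Longrightarrow> fnb f k" by (simp add: fnb_def)

lemma path_unique:
  assumes t: "is_tree E"
  shows "fwalk E f m \<Longrightarrow> fnb f m \<Longrightarrow> fwalk E f' m' \<Longrightarrow> fnb f' m' \<Longrightarrow> f 0 = f' 0 \<Longrightarrow> f m = f' m'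
    \<Longrightarrow> m = m' \<and> (\<forall>i\<le>m. f i = f' i)"
proof (induction m arbitrary: m')
  case 0
  show ?case
  proof (cases m')
    case 0 then show ?thesis using "0.prems" by simp
  next
    case (Suc k)
    then show ?thesis using closed_contra[OF t, of 0 m' f f'] "0.prems" by simp
  qed
next
  case (Suc k)
  show ?case
  proof (cases m')
    case 0 then show ?thesis using closed_contra[OF t, of "Suc k" m' f f'] Suc.prems by simp
  next
    case (Suc k')
    show ?thesis
    proof (cases "f k = f' k'")
      case True
      have "k = k' \<and> (\<forall>i\<le>k. f i = f' i)"
        using Suc.IH[of k'] Suc.prems True fwalk_mono fnb_mono \<open>m' = Suc k'\<close>
        by (metis le_add2 plus_1_eq_Suc)
      then show ?thesis using Suc.prems \<open>m' = Suc k'\<close> by (auto simp: le_Suc_eq)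
    next
      case False
      then show ?thesis using closed_contra[OF t, of "Suc k" m' f f'] Suc.prems \<open>m' = Suc k'\<close> by simp
    qed
  qed
qed

lemma ray_fwalk: "is_ray E r \<Longrightarrow> fwalk E r m" by (simp add: is_ray_def fwalk_def)
lemma ray_fnb: "is_ray E r \<Longrightarrow> fnb r m" by (simp add: is_ray_def fnb_def)

lemma aut_fwalk: "tree_aut E h \<Longrightarrow> fwalk E f m \<Longrightarrow> fwalk E (h \<circ> f) m"
  by (simp add: fwalk_def tree_aut_adj)
lemma aut_inj: "tree_aut E h \<Longrightarrow> h a = h b \<longleftrightarrow> a = b"
  by (meson bij_def injD tree_aut_def)
lemma aut_fnb: "tree_aut E h \<Longrightarrow> fnb f m \<Longrightarrow> fnb (h \<circ> f) m"
  by (simp add: fnb_def aut_inj)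
lemma aut_ray: "tree_aut E h \<Longrightarrow> is_ray E r \<Longrightarrow> is_ray E (h \<circ> r)"
  by (simp add: is_ray_def tree_aut_adj aut_inj)

lemma geodesic_fix:
  assumes t: "is_tree E" and r: "is_ray E r" and h: "tree_aut E h"
    and 0: "h (r 0) = r 0" and m: "h (r m) = r m" and i: "i \<le> m"
  shows "h (r i) = r i"
proof -
  have "m = m \<and> (\<forall>i\<le>m. (h \<circ> r) i = r i)"
    using path_unique[OF t, of "h \<circ> r" m r m] aut_fwalk[OF h] aut_fnb[OF h] ray_fwalk[OF r]
      ray_fnb[OF r] 0 m by simp
  then show ?thesis using i by simp
qed

lemma ray_self: "is_ray E r \<Longrightarrow> r \<in> ray_class E r"
  unfolding ray_class_def by (rule CollectI, rule conjI, assumption, rule exI[of _ 0], rule exI[of _ 0]) simp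

lemma class_fix:
  assumes t: "is_tree E" and r: "is_ray E r" and h: "tree_aut E h"
    and c: "h \<circ> r \<in> ray_class E r" and 0: "h (r 0) = r 0"
  shows "h (r n) = r n"
proof -
  obtain k m where km: "\<And>n. h (r (n + k)) = r (n + m)" using c unfolding ray_class_def by auto
  have "k = m \<and> (\<forall>i\<le>k. (h \<circ> r) i = r i)"
    using path_unique[OF t, of "h \<circ> r" k r m] aut_fwalk[OF h] aut_fnb[OF h] ray_fwalk[OF r]
      ray_fnb[OF r] 0 km[of 0] by simp
  then show ?thesis
  proof (cases "n \<le> k")
    case False
    then have "n = (n - k) + k" by simp
    then show ?thesis using km[of "n - k"] \<open>k = m \<and> _\<close> by metis
  qed auto
qed

lemma end_action_class:
  assumes h: "tree_aut E h" and r: "is_ray E r"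
  shows "end_action h (ray_class E r) = ray_class E (h \<circ> r)"
proof
  show "end_action h (ray_class E r) \<subseteq> ray_class E (h \<circ> r)"
  proof
    fix t assume "t \<in> end_action h (ray_class E r)"
    then obtain s k m where t: "t = h \<circ> s" and s: "is_ray E s" "\<And>n. s (n + k) = r (n + m)"
      unfolding end_action_def ray_class_def by auto
    have "\<forall>n. t (n + k) = (h \<circ> r) (n + m)" using s(2) t by simp
    then show "t \<in> ray_class E (h \<circ> r)" unfolding ray_class_def using aut_ray[OF h s(1)] t by blast
  qed
next
  show "ray_class E (h \<circ> r) \<subseteq> end_action h (ray_class E r)"
  proof
    fix s assume s: "s \<in> ray_class E (h \<circ> r)"
    then obtain k m where km: "\<And>n. s (n + k) = h (r (n + m))" and sr: "is_ray E s"
      unfolding ray_class_def by auto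
    have hi: "tree_aut E (hinv h)" using tree_aut_inv[OF h] .
    have "\<forall>n. (hinv h \<circ> s) (n + k) = r (n + m)" using km h by simp
    then have "hinv h \<circ> s \<in> ray_class E r" unfolding ray_class_def
      using aut_ray[OF hi sr] by blast
    moreover have "s = h \<circ> (hinv h \<circ> s)" using h by (auto simp: fun_eq_iff)
    ultimately show "s \<in> end_action h (ray_class E r)" unfolding end_action_def by blast
  qed
qed

lemma class_shift:
  assumes r: "is_ray E r"
  shows "ray_class E (\<lambda>n. r (n + k)) = ray_class E r"
proof
  show "ray_class E (\<lambda>n. r (n + k)) \<subseteq> ray_class E r"
    unfolding ray_class_def by (auto simp: add.assoc)
  show "ray_class E r \<subseteq> ray_class E (\<lambda>n. r (n + k))"
  proof
    fix s assume "s \<in> ray_class E r"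
    then obtain a b where s: "is_ray E s" "\<And>n. s (n + a) = r (n + b)" unfolding ray_class_def by auto
    have "\<forall>n. s (n + (a + k)) = r (n + b + k)" using s(2) by (metis add.assoc add.commute)
    then show "s \<in> ray_class E (\<lambda>n. r (n + k))" unfolding ray_class_def using s(1)
      by (auto simp: add.assoc)
  qed
qed

lemma end_action_comp: "end_action (a \<circ> b) X = end_action a (end_action b X)"
  unfolding end_action_def by (auto simp: image_comp comp_assoc)

lemma end_action_id: "end_action id X = X"
  unfolding end_action_def by simp

lemma fix_ray_stab:
  assumes h: "tree_aut E h" and r: "is_ray E r" and f: "\<And>n. h (r n) = r n"
  shows "end_action h (ray_class E r) = ray_class E r"
proof -
  have "h \<circ> r = r" using f by auto
  then show ?thesis using end_action_class[OF h r] by simp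
qed

lemma pow_ray:
  assumes "\<And>n. g (r n) = r (n + k)"
  shows "(g ^^ j) (r n) = r (n + j * k)"
  by (induction j arbitrary: n) (auto simp: assms algebra_simps)

lemma topspace_pw[simp]: "topspace pw_top = UNIV"
  by (simp add: pw_top_def topspace_product_topology PiE_UNIV_domain)

lemma PiE_UNIV_mem: "f \<in> Pi\<^sub>E UNIV U \<longleftrightarrow> (\<forall>i. f i \<in> U i)"
  by (simp add: PiE_UNIV_domain Pi_def)

lemma cont_eval: "continuous_map pw_top (discrete_topology UNIV) (\<lambda>f. f v)"
  unfolding pw_top_def by (rule continuous_map_product_projection) simp

lemma open_eval: "openin pw_top {f. f v = a}"
proof -
  have "openin pw_top {f \<in> topspace pw_top. f v \<in> {a}}"
    by (rule openin_continuous_map_preimage[OF cont_eval]) simp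
  then show ?thesis by simp
qed

lemma open_eval2: "openin pw_top {f. P (f u) (f v)}"
proof -
  have "{f. P (f u) (f v)} = \<Union> {{f. f u = a} \<inter> {f. f v = b} | a b. P a b}" by auto
  moreover have "openin pw_top (\<Union> {{f. f u = a} \<inter> {f. f v = b} | a b. P a b})"
    by (rule openin_Union) (auto intro!: openin_Int open_eval)
  ultimately show ?thesis by simp
qed

lemma closed_eval2: "closedin pw_top {f. P (f u) (f v)}"
proof -
  have "openin pw_top {f. \<not> P (f u) (f v)}" by (rule open_eval2)
  then show ?thesis unfolding closedin_def by (simp add: Compl_eq_Diff_UNIV[symmetric] Collect_neg_eq)
qed

lemma open_fix: "finite F \<Longrightarrow> openin pw_top {f. \<forall>v\<in>F. f v = c v}"
proof -
  assume F: "finite F"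
  have "openin pw_top (\<Inter> ((\<lambda>v. {f. f v = c v}) ` F) \<inter> topspace pw_top)"
    by (rule openin_INT[OF F]) (rule open_eval)
  moreover have "\<Inter> ((\<lambda>v. {f. f v = c v}) ` F) \<inter> topspace pw_top = {f. \<forall>v\<in>F. f v = c v}" by auto
  ultimately show ?thesis by simp
qed

lemma closed_surjpart: "finite R \<Longrightarrow> closedin pw_top {f. \<exists>v\<in>R. f v = w}"
proof -
  assume R: "finite R"
  have "openin pw_top (\<Inter> ((\<lambda>v. {f. f v \<noteq> w}) ` R) \<inter> topspace pw_top)"
    by (rule openin_INT[OF R]) (rule open_eval2[where P="\<lambda>a b. a \<noteq> w" and v=v])
  moreover have "\<Inter> ((\<lambda>v. {f. f v \<noteq> w}) ` R) \<inter> topspace pw_top = UNIV - {f. \<exists>v\<in>R. f v = w}" by auto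
  ultimately show ?thesis unfolding closedin_def by simp
qed

lemma sub_aut_top: "G \<subseteq> carrier (aut_group E) \<Longrightarrow> subtopology (aut_top E) G = subtopology pw_top G"
  unfolding aut_top_def by (simp add: subtopology_subtopology Int_absorb1 inf.absorb_iff2)

lemma closed_subgroupD: "closed_subgroup E G \<Longrightarrow> subgroup G (aut_group E)"
  by (simp add: closed_subgroup_def)

lemma open_from_fix:
  assumes cs: "closed_subgroup E G" and SG: "S \<subseteq> G"
    and comp: "\<And>a b. a \<in> S \<Longrightarrow> b \<in> S \<Longrightarrow> a \<circ> b \<in> S"
    and F: "finite F" and fx: "\<And>h. h \<in> G \<Longrightarrow> (\<forall>v\<in>F. h v = v) \<Longrightarrow> h \<in> S"
  shows "openin (subtopology (aut_top E) G) S"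
proof -
  have sg: "subgroup G (aut_group E)" using cs by (rule closed_subgroupD)
  note sgD = subgroupD[OF sg]
  have Gc: "G \<subseteq> carrier (aut_group E)" using sgD(1) by simp
  show ?thesis unfolding sub_aut_top[OF Gc] openin_subopen[of _ S]
  proof
    fix f assume f: "f \<in> S"
    define T where "T = G \<inter> {h. \<forall>v\<in>F. h v = f v}"
    have "openin (subtopology pw_top G) T" unfolding T_def
      by (rule openin_subtopology_Int2[OF open_fix[OF F]])
    moreover have "f \<in> T" using f SG by (auto simp: T_def)
    moreover have "T \<subseteq> S"
    proof
      fix h assume h: "h \<in> T"
      have fG: "f \<in> G" using f SG by auto
      then have tf: "tree_aut E f" using sgD(1) by auto
      have "hinv f \<circ> h \<in> G" using sgD(3)[OF sgD(4)[OF fG]] h by (auto simp: T_def)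
      moreover have "\<forall>v\<in>F. (hinv f \<circ> h) v = v" using h tf by (auto simp: T_def)
      ultimately have "hinv f \<circ> h \<in> S" using fx by blast
      then have "f \<circ> (hinv f \<circ> h) \<in> S" using comp f by blast
      moreover have "f \<circ> (hinv f \<circ> h) = h" using tf by (auto simp: fun_eq_iff)
      ultimately show "h \<in> S" by simp
    qed
    ultimately show "\<exists>T. openin (subtopology pw_top G) T \<and> f \<in> T \<and> T \<subseteq> S" by blast
  qed
qed

lemma fix_from_open:
  assumes cs: "closed_subgroup E G" and op: "openin (subtopology (aut_top E) G) S" and i: "id \<in> S"
  shows "\<exists>F. finite F \<and> (\<forall>h\<in>G. (\<forall>v\<in>F. h v = v) \<longrightarrow> h \<in> S)"
proof -
  have Gc: "G \<subseteq> carrier (aut_group E)" using subgroupD(1)[OF closed_subgroupD[OF cs]] by simp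
  obtain T where T: "openin pw_top T" "S = T \<inter> G"
    using op unfolding sub_aut_top[OF Gc] openin_subtopology by blast
  have "id \<in> T" using i T by auto
  then obtain U where U: "finite {i. U i \<noteq> UNIV}" "id \<in> Pi\<^sub>E UNIV U" "Pi\<^sub>E UNIV U \<subseteq> T"
    using T(1) unfolding pw_top_def openin_product_topology_alt by fastforce
  show ?thesis
  proof (intro exI conjI ballI impI)
    show "finite {i. U i \<noteq> UNIV}" by (rule U(1))
    fix h assume h: "h \<in> G" "\<forall>v\<in>{i. U i \<noteq> UNIV}. h v = v"
    have "h \<in> Pi\<^sub>E UNIV U"
      unfolding PiE_UNIV_mem
    proof
      fix i show "h i \<in> U i"
      proof (cases "U i = UNIV")
        case False then show ?thesis using h U(2) by (auto simp: PiE_UNIV_mem)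
      qed simp
    qed
    then show "h \<in> S" using U(3) T(2) h by auto
  qed
qed

lemma orbit_finite:
  assumes "compactin (aut_top E) K"
  shows "finite ((\<lambda>h. h u) ` K)"
proof -
  have "continuous_map (aut_top E) (discrete_topology UNIV) (\<lambda>h. h u)"
    unfolding aut_top_def by (rule continuous_map_from_subtopology[OF cont_eval])
  then have "compactin (discrete_topology UNIV) ((\<lambda>h. h u) ` K)"
    by (rule image_compactin[OF assms])
  then show ?thesis by (simp add: compactin_discrete_topology)
qed

primrec nbr :: "('v \<Rightarrow> 'v \<Rightarrow> bool) \<Rightarrow> 'v \<Rightarrow> nat \<Rightarrow> 'v set" where
  "nbr E v0 0 = {v0}"
| "nbr E v0 (Suc n) = nbr E v0 n \<union> (\<Union>u\<in>nbr E v0 n. {w. E u w})"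

lemma finite_nbr: "locally_finite E \<Longrightarrow> finite (nbr E v0 n)"
  by (induction n) (auto simp: locally_finite_def)

lemma nbr_aut: "tree_aut E h \<Longrightarrow> h v0 = v0 \<Longrightarrow> w \<in> nbr E v0 n \<Longrightarrow> h w \<in> nbr E v0 n"
proof (induction n arbitrary: w)
  case (Suc n)
  then show ?case by (auto simp: tree_aut_adj) (metis tree_aut_adj)
qed simp

lemma nbr_reach:
  assumes t: "is_tree E" shows "\<exists>n. w \<in> nbr E v0 n"
proof -
  have "(v0, w) \<in> {(a, b). E a b}\<^sup>*" using t by (simp add: is_tree_def)
  then show ?thesis
  proof (induction rule: rtrancl_induct)
    case base
    then show ?case by (rule exI[of _ 0]) simp
  next
    case (step y z)
    then obtain n where "y \<in> nbr E v0 n" by blast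
    then have "z \<in> nbr E v0 (Suc n)" using step by auto
    then show ?case by blast
  qed
qed

definition dd :: "('v \<Rightarrow> 'v \<Rightarrow> bool) \<Rightarrow> 'v \<Rightarrow> 'v \<Rightarrow> nat" where
  "dd E v0 w = (SOME n. w \<in> nbr E v0 n)"

lemma dd_mem: "is_tree E \<Longrightarrow> w \<in> nbr E v0 (dd E v0 w)"
  unfolding dd_def by (rule someI_ex[OF nbr_reach])

definition A0 :: "('v \<Rightarrow> 'v \<Rightarrow> bool) \<Rightarrow> 'v \<Rightarrow> ('v \<Rightarrow> 'v) set" where
  "A0 E v0 = {f. f v0 = v0 \<and> (\<forall>u v. E (f u) (f v) = E u v) \<and> (\<forall>u v. f u = f v \<longrightarrow> u = v)
     \<and> (\<forall>w. \<exists>v\<in>nbr E v0 (dd E v0 w). f v = w)}"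

lemma A0_eq:
  assumes t: "is_tree E"
  shows "A0 E v0 = {f. tree_aut E f \<and> f v0 = v0}"
proof
  show "A0 E v0 \<subseteq> {f. tree_aut E f \<and> f v0 = v0}"
  proof
    fix f assume "f \<in> A0 E v0"
    then have f0: "f v0 = v0" "\<forall>u v. E (f u) (f v) = E u v" "\<forall>u v. f u = f v \<longrightarrow> u = v"
        "\<forall>w. \<exists>v\<in>nbr E v0 (dd E v0 w). f v = w" unfolding A0_def by auto
    have "inj f" using f0(3) by (auto simp: inj_def)
    moreover have "surj f"
    proof -
      have "\<forall>w. w \<in> range f" using f0(4) rangeI by metis
      then show ?thesis by auto
    qed
    ultimately have f: "f v0 = v0" "\<forall>u v. E (f u) (f v) = E u v" "inj f" "surj f" using f0 by auto
    then show "f \<in> {f. tree_aut E f \<and> f v0 = v0}" by (simp add: tree_aut_def bij_def)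
  qed
next
  show "{f. tree_aut E f \<and> f v0 = v0} \<subseteq> A0 E v0"
  proof
    fix f assume "f \<in> {f. tree_aut E f \<and> f v0 = v0}"
    then have f: "tree_aut E f" "f v0 = v0" by auto
    have fi: "tree_aut E (hinv f)" using tree_aut_inv[OF f(1)] .
    have fi0: "hinv f v0 = v0" using inv_comp_self[OF f(1), of v0] f(2) by simp
    have "\<exists>v\<in>nbr E v0 (dd E v0 w). f v = w" for w
      using nbr_aut[OF fi fi0 dd_mem[OF t]] comp_inv_self[OF f(1)] by blast
    then show "f \<in> A0 E v0" unfolding A0_def using f by (auto simp: tree_aut_adj aut_inj)
  qed
qed

lemma A0_closed:
  assumes lf: "locally_finite E"
  shows "closedin pw_top (A0 E v0)"
proof -
  let ?S1 = "{f. f v0 = v0}"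
  let ?S2 = "\<Inter>p\<in>UNIV. {f. E (f (fst p)) (f (snd p)) = E (fst p) (snd p)}"
  let ?S3 = "\<Inter>p\<in>UNIV. {f. f (fst p) = f (snd p) \<longrightarrow> fst p = snd p}"
  let ?S4 = "\<Inter>w\<in>UNIV. {f. \<exists>v\<in>nbr E v0 (dd E v0 w). f v = w}"
  have eq: "A0 E v0 = ?S1 \<inter> ?S2 \<inter> ?S3 \<inter> ?S4" unfolding A0_def by auto
  have c1: "closedin pw_top ?S1" using closed_eval2[where P="\<lambda>a b. a = v0" and u=v0 and v=v0] by simp
  have c2: "closedin pw_top ?S2"
    by (rule closedin_INT) (auto intro: closed_eval2[where P="\<lambda>a b. E a b = E _ _"])
  have c3: "closedin pw_top ?S3"
    by (rule closedin_INT) (auto intro: closed_eval2[where P="\<lambda>a b. a = b \<longrightarrow> _"])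
  have c4: "closedin pw_top ?S4"
    by (rule closedin_INT) (auto intro: closed_surjpart[OF finite_nbr[OF lf]])
  show ?thesis unfolding eq using c1 c2 c3 c4 by (intro closedin_Int) 
qed

lemma compact_fix:
  assumes t: "is_tree E" and lf: "locally_finite E" and cs: "closed_subgroup E G" and P: "v0 \<in> P"
  shows "compactin (aut_top E) {h\<in>G. \<forall>v\<in>P. h v = v}"
proof -
  let ?C0 = "{h\<in>G. \<forall>v\<in>P. h v = v}"
  have sg: "subgroup G (aut_group E)" using cs by (rule closed_subgroupD)
  note sgD = subgroupD[OF sg]
  have C0c: "?C0 \<subseteq> carrier (aut_group E)" using sgD(1) by auto
  define S where "S = Pi\<^sub>E UNIV (\<lambda>v. nbr E v0 (dd E v0 v))"
  have cS: "compactin pw_top S" unfolding S_def pw_top_def compactin_PiE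
    by (simp add: compactin_discrete_topology finite_nbr[OF lf])
  have sub: "?C0 \<subseteq> S"
  proof
    fix h assume h: "h \<in> ?C0"
    then have th: "tree_aut E h" and h0: "h v0 = v0" using sgD(1) P by auto
    show "h \<in> S" unfolding S_def PiE_UNIV_mem
    proof
      fix v show "h v \<in> nbr E v0 (dd E v0 v)" by (rule nbr_aut[OF th h0 dd_mem[OF t]])
    qed
  qed
  obtain C where C: "closedin pw_top C" "G = C \<inter> carrier (aut_group E)"
    using cs unfolding closed_subgroup_def aut_top_def closedin_subtopology by blast
  let ?F = "\<Inter>v\<in>P. {f. f v = v}"
  have eq: "?C0 = C \<inter> A0 E v0 \<inter> ?F"
  proof (rule equalityI)
    show "?C0 \<subseteq> C \<inter> A0 E v0 \<inter> ?F"
    proof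
      fix h assume h: "h \<in> ?C0"
      then have "h \<in> C" "tree_aut E h" "\<forall>v\<in>P. h v = v" using C(2) by auto
      then show "h \<in> C \<inter> A0 E v0 \<inter> ?F" unfolding A0_eq[OF t] using P by auto
    qed
    show "C \<inter> A0 E v0 \<inter> ?F \<subseteq> ?C0"
    proof
      fix h assume h: "h \<in> C \<inter> A0 E v0 \<inter> ?F"
      then have "h \<in> C" "tree_aut E h" "\<forall>v\<in>P. h v = v" unfolding A0_eq[OF t] by auto
      then show "h \<in> ?C0" using C(2) by auto
    qed
  qed
  have cF: "closedin pw_top ?F"
  proof (rule closedin_INT)
    show "P \<noteq> {}" using P by blast
    fix v show "closedin pw_top {f. f v = v}" using closed_eval2[where P="\<lambda>a b. a = v" and u=v and v=v] by simp
  qed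
  have "closedin pw_top ?C0" unfolding eq
    by (intro closedin_Int C(1) A0_closed[OF lf] cF)
  then have "compactin pw_top ?C0" using closed_compactin[OF cS sub] by blast
  then show ?thesis unfolding aut_top_def compactin_subtopology using C0c by blast
qed

definition sgp :: "('v \<Rightarrow> 'v \<Rightarrow> bool) \<Rightarrow> ('v \<Rightarrow> 'v) set \<Rightarrow> bool" where
  "sgp E H \<longleftrightarrow> H \<subseteq> {f. tree_aut E f} \<and> id \<in> H \<and> (\<forall>a\<in>H. \<forall>b\<in>H. a \<circ> b \<in> H) \<and> (\<forall>a\<in>H. hinv a \<in> H)"

lemma sgp_subgroup: "subgroup H (aut_group E) \<Longrightarrow> sgp E H"
  unfolding sgp_def using subgroupD[of H E] by blast

lemma sgpD:
  assumes "sgp E H"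
  shows "\<And>a. a \<in> H \<Longrightarrow> tree_aut E a" "id \<in> H" "\<And>a b. a \<in> H \<Longrightarrow> b \<in> H \<Longrightarrow> a \<circ> b \<in> H"
    "\<And>a. a \<in> H \<Longrightarrow> hinv a \<in> H"
  using assms unfolding sgp_def by blast+

lemma sgp_Int: "sgp E H \<Longrightarrow> sgp E K \<Longrightarrow> sgp E (H \<inter> K)"
  unfolding sgp_def by blast

lemma sgp_fix: "sgp E H \<Longrightarrow> sgp E (H \<inter> {h. \<forall>v\<in>F. h v = v})"
proof -
  assume H: "sgp E H"
  have "hinv a v = v" if "a \<in> H" "\<forall>v\<in>F. a v = v" "v \<in> F" for a v
  proof -
    have "tree_aut E a" using sgpD(1)[OF H that(1)] .
    then have "hinv a (a v) = v" by (rule inv_comp_self)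
    then show ?thesis using that by simp
  qed
  then show ?thesis using H unfolding sgp_def by auto
qed

definition rc :: "('v \<Rightarrow> 'v) set \<Rightarrow> ('v \<Rightarrow> 'v) set \<Rightarrow> ('v \<Rightarrow> 'v) set set" where
  "rc H L = (\<lambda>a. (\<lambda>h. h \<circ> a) ` H) ` L"

lemma sg_index_rc: "sg_index E K H = card (rc H K)"
  by (simp add: sg_index_eq rc_def)

lemma right_mult_self:
  assumes "sgp E H" "a \<in> H" shows "(\<lambda>h. h \<circ> a) ` H = H"
proof
  show "(\<lambda>h. h \<circ> a) ` H \<subseteq> H" using sgpD(3)[OF assms(1)] assms(2) by auto
  show "H \<subseteq> (\<lambda>h. h \<circ> a) ` H"
  proof
    fix h assume h: "h \<in> H"
    have ta: "tree_aut E a" using sgpD(1)[OF assms] .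
    have "h \<circ> hinv a \<in> H" using sgpD(3,4)[OF assms(1)] h assms(2) by blast
    moreover have "h = (h \<circ> hinv a) \<circ> a" using ta by (auto simp: fun_eq_iff)
    ultimately show "h \<in> (\<lambda>h. h \<circ> a) ` H" by blast
  qed
qed

lemma left_mult_self:
  assumes "sgp E H" "a \<in> H" shows "(\<lambda>h. a \<circ> h) ` H = H"
proof
  show "(\<lambda>h. a \<circ> h) ` H \<subseteq> H" using sgpD(3)[OF assms(1)] assms(2) by auto
  show "H \<subseteq> (\<lambda>h. a \<circ> h) ` H"
  proof
    fix h assume h: "h \<in> H"
    have ta: "tree_aut E a" using sgpD(1)[OF assms] .
    have "hinv a \<circ> h \<in> H" using sgpD(3,4)[OF assms(1)] h assms(2) by blast
    moreover have "h = a \<circ> (hinv a \<circ> h)" using ta by (auto simp: fun_eq_iff)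
    ultimately show "h \<in> (\<lambda>h. a \<circ> h) ` H" by blast
  qed
qed

lemma coset_eqD:
  assumes "sgp E H" "(\<lambda>h. h \<circ> a) ` H = (\<lambda>h. h \<circ> b) ` H"
  shows "\<exists>h\<in>H. a = h \<circ> b"
proof -
  have "id \<circ> a \<in> (\<lambda>h. h \<circ> a) ` H" using sgpD(2)[OF assms(1)] by blast
  then show ?thesis using assms(2) by auto
qed

lemma coset_shift:
  assumes "sgp E H" "h0 \<in> H" shows "(\<lambda>h. h \<circ> (h0 \<circ> b)) ` H = (\<lambda>h. h \<circ> b) ` H"
proof -
  have "(\<lambda>h. h \<circ> (h0 \<circ> b)) ` H = (\<lambda>h. h \<circ> b) ` ((\<lambda>h. h \<circ> h0) ` H)"
    by (auto simp: image_image comp_assoc)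
  then show ?thesis using right_mult_self[OF assms] by simp
qed

lemma rc_self: "sgp E H \<Longrightarrow> rc H H = {H}"
proof -
  assume H: "sgp E H"
  have "(\<lambda>a. (\<lambda>h. h \<circ> a) ` H) ` H = (\<lambda>a. H) ` H" using right_mult_self[OF H] by (intro image_cong) auto
  moreover have "(\<lambda>a. H) ` H = {H}"
  proof -
    have "H \<noteq> {}" using sgpD(2)[OF H] by blast
    then show ?thesis by (simp add: image_constant_conv)
  qed
  ultimately show ?thesis unfolding rc_def by (simp only:)
qed

lemma card_image_factor:
  assumes fin: "finite (g ` A)" and fac: "\<And>a b. a \<in> A \<Longrightarrow> b \<in> A \<Longrightarrow> g a = g b \<Longrightarrow> f a = f b"
  shows "card (f ` A) \<le> card (g ` A)" "finite (f ` A)"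
proof -
  have "f ` A = (\<lambda>y. f (SOME a. a \<in> A \<and> g a = y)) ` (g ` A)"
  proof
    show "f ` A \<subseteq> (\<lambda>y. f (SOME a. a \<in> A \<and> g a = y)) ` (g ` A)"
    proof
      fix z assume "z \<in> f ` A"
      then obtain a where a: "a \<in> A" "z = f a" by blast
      have "\<exists>a'. a' \<in> A \<and> g a' = g a" using a by blast
      then have "(SOME a'. a' \<in> A \<and> g a' = g a) \<in> A \<and> g (SOME a'. a' \<in> A \<and> g a' = g a) = g a"
        by (rule someI_ex)
      then have "f (SOME a'. a' \<in> A \<and> g a' = g a) = f a" using fac a(1) by blast
      then have "z = (\<lambda>y. f (SOME a. a \<in> A \<and> g a = y)) (g a)" using a by simp
      moreover have "g a \<in> g ` A" using a by simp
      ultimately show "z \<in> (\<lambda>y. f (SOME a. a \<in> A \<and> g a = y)) ` (g ` A)" by (rule image_eqI)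
    qed
    show "(\<lambda>y. f (SOME a. a \<in> A \<and> g a = y)) ` (g ` A) \<subseteq> f ` A"
    proof
      fix z assume "z \<in> (\<lambda>y. f (SOME a. a \<in> A \<and> g a = y)) ` (g ` A)"
      then obtain a where a: "a \<in> A" "z = f (SOME a'. a' \<in> A \<and> g a' = g a)" by blast
      have "\<exists>a'. a' \<in> A \<and> g a' = g a" using a by blast
      then have "(SOME a'. a' \<in> A \<and> g a' = g a) \<in> A" by (metis (mono_tags, lifting) someI_ex)
      then show "z \<in> f ` A" using a by blast
    qed
  qed
  then show "card (f ` A) \<le> card (g ` A)" "finite (f ` A)" using card_image_le[OF fin] finite_imageI[OF fin] by simp_all
qed

lemma idx_mono:
  assumes H: "sgp E H" and H': "sgp E H'" and sub: "H' \<subseteq> H" and fin: "finite (rc H' L)"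
  shows "card (rc H L) \<le> card (rc H' L)" "finite (rc H L)"
proof -
  have fac: "(\<lambda>h. h \<circ> a) ` H = (\<lambda>h. h \<circ> b) ` H"
    if ab: "a \<in> L" "b \<in> L" "(\<lambda>h. h \<circ> a) ` H' = (\<lambda>h. h \<circ> b) ` H'" for a b
  proof -
    obtain h0 where "h0 \<in> H'" "a = h0 \<circ> b" using coset_eqD[OF H' ab(3)] by blast
    then show ?thesis using coset_shift[OF H, of h0 b] sub by auto
  qed
  have fin': "finite ((\<lambda>a. (\<lambda>h. h \<circ> a) ` H') ` L)" using fin unfolding rc_def .
  show "card (rc H L) \<le> card (rc H' L)" "finite (rc H L)"
    unfolding rc_def using card_image_factor[where f="\<lambda>a. (\<lambda>h. h \<circ> a) ` H", OF fin' fac] by blast+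
qed

lemma idx_fix_bound:
  assumes L: "sgp E L" and F: "finite F" and orb: "\<And>u. u \<in> F \<Longrightarrow> finite ((\<lambda>l. l u) ` L)"
  shows "card (rc (L \<inter> {h. \<forall>v\<in>F. h v = v}) L) \<le> (\<Prod>u\<in>F. card ((\<lambda>l. l u) ` L))"
    "finite (rc (L \<inter> {h. \<forall>v\<in>F. h v = v}) L)"
proof -
  let ?H = "L \<inter> {h. \<forall>v\<in>F. h v = v}"
  have H: "sgp E ?H" using sgp_fix[OF L] .
  let ?g = "\<lambda>a. restrict (\<lambda>u. hinv a u) F"
  have gsub: "?g ` L \<subseteq> Pi\<^sub>E F (\<lambda>u. (\<lambda>l. l u) ` L)"
    using sgpD(4)[OF L] by auto
  have finP: "finite (Pi\<^sub>E F (\<lambda>u. (\<lambda>l. l u) ` L))" using F orb by (simp add: finite_PiE)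
  have fing: "finite (?g ` L)" using finite_subset[OF gsub finP] .
  have fac: "(\<lambda>h. h \<circ> a) ` ?H = (\<lambda>h. h \<circ> b) ` ?H"
    if ab: "a \<in> L" "b \<in> L" "?g a = ?g b" for a b
  proof -
    have ta: "tree_aut E a" and tb: "tree_aut E b" using ab sgpD(1)[OF L] by auto
    have e: "hinv a u = hinv b u" if "u \<in> F" for u using ab(3) that
      by (metis restrict_apply')
    let ?h0 = "a \<circ> hinv b"
    have "?h0 \<in> L" using sgpD(3,4)[OF L] ab by blast
    moreover have "\<forall>v\<in>F. ?h0 v = v"
    proof
      fix v assume "v \<in> F"
      then have "?h0 v = a (hinv a v)" using e by simp
      also have "\<dots> = v" using ta by (rule comp_inv_self)
      finally show "?h0 v = v" .
    qed
    ultimately have "?h0 \<in> ?H" by blast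
    moreover have "a = ?h0 \<circ> b" using tb by (auto simp: fun_eq_iff)
    ultimately show ?thesis using coset_shift[OF H, of ?h0 b] by simp
  qed
  have c1: "card (rc ?H L) \<le> card (?g ` L)" "finite (rc ?H L)"
    unfolding rc_def using card_image_factor[where f="\<lambda>a. (\<lambda>h. h \<circ> a) ` ?H", OF fing fac] by blast+
  have "card (?g ` L) \<le> card (Pi\<^sub>E F (\<lambda>u. (\<lambda>l. l u) ` L))" using card_mono[OF finP gsub] .
  also have "\<dots> = (\<Prod>u\<in>F. card ((\<lambda>l. l u) ` L))" using card_PiE[OF F] .
  finally show "card (rc ?H L) \<le> (\<Prod>u\<in>F. card ((\<lambda>l. l u) ` L))" using c1 by linarith
  show "finite (rc ?H L)" using c1 by blast
qed

lemma orbit_decomp: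
  assumes L: "sgp E L" and H: "sgp E H" and sub: "H \<subseteq> L" and fin: "finite (rc H L)"
  shows "card ((\<lambda>l. l w) ` L) \<le> card (rc H L) * card ((\<lambda>h. h w) ` H)"
proof -
  let ?T = "\<lambda>a. (\<lambda>h. hinv a (h w)) ` H"
  have fac: "?T a = ?T b"
    if ab: "a \<in> L" "b \<in> L" "(\<lambda>h. h \<circ> a) ` H = (\<lambda>h. h \<circ> b) ` H" for a b
  proof -
    obtain h0 where h0: "h0 \<in> H" "a = h0 \<circ> b" using coset_eqD[OF H ab(3)] by blast
    have tb: "tree_aut E b" and th0: "tree_aut E h0" using ab h0 sgpD(1)[OF L] sgpD(1)[OF H] by auto
    have "hinv a = hinv b \<circ> hinv h0" using h0(2) o_inv_distrib tree_aut_bij th0 tb by metis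
    then have "?T a = (\<lambda>h. hinv b (h w)) ` ((\<lambda>h. hinv h0 \<circ> h) ` H)" by (auto simp: image_image)
    also have "(\<lambda>h. hinv h0 \<circ> h) ` H = H" using left_mult_self[OF H sgpD(4)[OF H h0(1)]] .
    finally show ?thesis .
  qed
  have fin': "finite ((\<lambda>a. (\<lambda>h. h \<circ> a) ` H) ` L)" using fin unfolding rc_def .
  have c1: "card (?T ` L) \<le> card (rc H L)" "finite (?T ` L)"
    unfolding rc_def using card_image_factor[where f="?T", OF fin' fac] by blast+
  have cov: "(\<lambda>l. l w) ` L \<subseteq> \<Union> (?T ` L)"
  proof
    fix z assume "z \<in> (\<lambda>l. l w) ` L"
    then obtain l where l: "l \<in> L" "z = l w" by blast
    have tl: "tree_aut E l" using l sgpD(1)[OF L] by auto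
    have "hinv l \<in> L" using sgpD(4)[OF L l(1)] .
    moreover have "z = hinv (hinv l) (id w)" using l tl inv_inv_eq tree_aut_bij by (metis id_apply)
    ultimately show "z \<in> \<Union> (?T ` L)" using sgpD(2)[OF H] by blast
  qed
  show ?thesis
  proof (cases "finite ((\<lambda>h. h w) ` H)")
    case False
    have "(\<lambda>h. h w) ` H \<subseteq> (\<lambda>l. l w) ` L" using sub by blast
    then have "infinite ((\<lambda>l. l w) ` L)" using False finite_subset by blast
    then show ?thesis by simp
  next
    case True
  have finU: "finite (\<Union> (?T ` L))"
  proof (rule finite_Union[OF c1(2)])
    fix X assume "X \<in> ?T ` L"
    then obtain a where "X = ?T a" by (rule imageE)
    then have "X = hinv a ` ((\<lambda>h. h w) ` H)" by (auto simp: image_image)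
    then show "finite X" using True by simp
  qed
  have "card ((\<lambda>l. l w) ` L) \<le> card (\<Union> (?T ` L))" using card_mono[OF finU cov] .
  also have "\<dots> \<le> sum card (?T ` L)" by (rule card_Union_le_sum_card)
  also have "\<dots> \<le> card (?T ` L) * card ((\<lambda>h. h w) ` H)"
  proof -
    have "card X \<le> card ((\<lambda>h. h w) ` H)" if XT: "X \<in> ?T ` L" for X
    proof -
      from XT obtain a where "X = ?T a" by (rule imageE)
      then have "X = hinv a ` ((\<lambda>h. h w) ` H)" by (auto simp: image_image)
      then show ?thesis using card_image_le[OF True, of "hinv a"] by simp
    qed
    then show ?thesis using sum_bounded_above[of "?T ` L" card] by simp
  qed
  also have "\<dots> \<le> card (rc H L) * card ((\<lambda>h. h w) ` H)" using c1(1) by simp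
  finally show ?thesis .
  qed
qed

lemma card_image_factor_inj:
  assumes fin: "finite (g ` A)" and fac: "\<And>a b. a \<in> A \<Longrightarrow> b \<in> A \<Longrightarrow> g a = g b \<Longrightarrow> f a = f b"
    and eqc: "card (f ` A) = card (g ` A)" and ab: "a \<in> A" "b \<in> A" "f a = f b"
  shows "g a = g b"
proof -
  define \<phi> where "\<phi> y = f (SOME a. a \<in> A \<and> g a = y)" for y
  have phi: "\<phi> (g c) = f c" if c: "c \<in> A" for c
  proof -
    have "\<exists>a'. a' \<in> A \<and> g a' = g c" using c by blast
    then have "(SOME a'. a' \<in> A \<and> g a' = g c) \<in> A \<and> g (SOME a'. a' \<in> A \<and> g a' = g c) = g c"
      by (rule someI_ex)
    then show ?thesis unfolding \<phi>_def using fac c by blast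
  qed
  have "f ` A = \<phi> ` (g ` A)"
  proof
    show "f ` A \<subseteq> \<phi> ` (g ` A)"
    proof
      fix z assume "z \<in> f ` A"
      then obtain c where c: "c \<in> A" "z = f c" by blast
      then have "z = \<phi> (g c)" using phi by simp
      moreover have "g c \<in> g ` A" using c by simp
      ultimately show "z \<in> \<phi> ` (g ` A)" by (rule image_eqI)
    qed
    show "\<phi> ` (g ` A) \<subseteq> f ` A" using phi by auto
  qed
  then have "inj_on \<phi> (g ` A)" using eqc fin eq_card_imp_inj_on by metis
  moreover have "\<phi> (g a) = \<phi> (g b)" using phi ab by simp
  ultimately show ?thesis
  proof (rule inj_onD)
    show "g a \<in> g ` A" "g b \<in> g ` A" using ab(1,2) by simp_all
  qed
qed

lemma sgp_conj:
  assumes K: "sgp E K" and c: "tree_aut E c"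
  shows "sgp E ((\<lambda>k. c \<circ> k \<circ> hinv c) ` K)"
  unfolding sgp_def
proof (intro conjI ballI subsetI)
  note kD = sgpD[OF K]
  have ci: "tree_aut E (hinv c)" using tree_aut_inv[OF c] .
  show "f \<in> {f. tree_aut E f}" if "f \<in> (\<lambda>k. c \<circ> k \<circ> hinv c) ` K" for f
    using that kD(1) c ci by (auto intro!: tree_aut_comp)
  have "c \<circ> id \<circ> hinv c = id" using c by (auto simp: fun_eq_iff)
  then show "id \<in> (\<lambda>k. c \<circ> k \<circ> hinv c) ` K" using kD(2) by (metis image_eqI)
  fix a b assume a: "a \<in> (\<lambda>k. c \<circ> k \<circ> hinv c) ` K"
  then obtain ka where ka: "ka \<in> K" "a = c \<circ> ka \<circ> hinv c" by blast
  show "hinv a \<in> (\<lambda>k. c \<circ> k \<circ> hinv c) ` K"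
  proof -
    have tka: "tree_aut E ka" using kD(1) ka by auto
    have "hinv a = c \<circ> hinv ka \<circ> hinv c"
    proof -
      have "a \<circ> (c \<circ> hinv ka \<circ> hinv c) = id" using ka tka c by (auto simp: fun_eq_iff)
      moreover have "(c \<circ> hinv ka \<circ> hinv c) \<circ> a = id" using ka tka c by (auto simp: fun_eq_iff)
      ultimately show ?thesis by (rule inv_unique_comp)
    qed
    then show ?thesis using kD(4)[OF ka(1)] by blast
  qed
  assume b: "b \<in> (\<lambda>k. c \<circ> k \<circ> hinv c) ` K"
  then obtain kb where kb: "kb \<in> K" "b = c \<circ> kb \<circ> hinv c" by blast
  have "a \<circ> b = c \<circ> (ka \<circ> kb) \<circ> hinv c" using ka kb c by (auto simp: fun_eq_iff)
  then show "a \<circ> b \<in> (\<lambda>k. c \<circ> k \<circ> hinv c) ` K" using kD(3)[OF ka(1) kb(1)] by blast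
qed

locale setting =
  fixes E :: "'v \<Rightarrow> 'v \<Rightarrow> bool" and G :: "('v \<Rightarrow> 'v) set" and g :: "'v \<Rightarrow> 'v"
    and r :: "nat \<Rightarrow> 'v" and k :: nat
  assumes t: "is_tree E" and lf: "locally_finite E" and cs: "closed_subgroup E G"
    and gG: "g \<in> G" and ray: "is_ray E r" and kpos: "k > 0" and gr: "\<And>n. g (r n) = r (n + k)"
begin

abbreviation "x \<equiv> ray_class E r"
abbreviation "Gx \<equiv> end_stabilizer G x"
abbreviation "orb K u \<equiv> (\<lambda>h. h u) ` K"
abbreviation "cj n K \<equiv> (\<lambda>h. (g ^^ n) \<circ> h \<circ> hinv (g ^^ n)) ` K"
definition "Kr = {h\<in>G. \<forall>v\<in>range r. h v = v}"

lemma sgG: "sgp E G" using sgp_subgroup[OF closed_subgroupD[OF cs]] .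
lemma tg: "tree_aut E g" using sgpD(1)[OF sgG gG] .
lemma gnG: "g ^^ n \<in> G"
proof (induction n)
  case 0 show ?case using sgpD(2)[OF sgG] by (simp only: funpow.simps(1))
next
  case (Suc n) show ?case using sgpD(3)[OF sgG gG Suc.IH] by (simp only: funpow.simps(2))
qed
lemma tgn: "tree_aut E (g ^^ n)" using tree_aut_pow[OF tg] .
lemma gnr: "(g ^^ n) (r m) = r (m + n * k)" using pow_ray[of g r k, OF gr] .
lemma gnir: "hinv (g ^^ n) (r (m + n * k)) = r m"
  using inv_comp_self[OF tgn, of n "r m"] gnr by simp

lemma conj_eq: "conj_pow E g n K = cj n K"
  using conj_pow_eq[OF tg] .

lemma Gx_sgp: "sgp E Gx"
  unfolding sgp_def end_stabilizer_def
proof (intro conjI ballI subsetI)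
  note gD = sgpD[OF sgG]
  show "f \<in> {f. tree_aut E f}" if "f \<in> {h \<in> G. end_action h x = x}" for f using that gD(1) by auto
  show "id \<in> {h \<in> G. end_action h x = x}" using gD(2) by (simp add: end_action_id)
  fix a b assume a: "a \<in> {h \<in> G. end_action h x = x}"
  show "hinv a \<in> {h \<in> G. end_action h x = x}"
  proof -
    have ta: "tree_aut E a" using a gD(1) by auto
    have ia: "hinv a \<circ> a = id" using ta by (auto simp: fun_eq_iff)
    have "end_action (hinv a) x = end_action (hinv a) (end_action a x)" using a by simp
    also have "\<dots> = end_action (hinv a \<circ> a) x" by (simp only: end_action_comp)
    also have "\<dots> = x" by (simp only: ia end_action_id)
    finally have "end_action (hinv a) x = x" .
    then show ?thesis using gD(4) a by auto
  qed
  assume b: "b \<in> {h \<in> G. end_action h x = x}"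
  then show "a \<circ> b \<in> {h \<in> G. end_action h x = x}" using a gD(3) by (auto simp: end_action_comp)
qed

lemma Gx_fix_ray:
  assumes h: "h \<in> G" "end_action h x = x" "h (r 0) = r 0"
  shows "h (r n) = r n"
proof -
  have th: "tree_aut E h" using sgpD(1)[OF sgG h(1)] .
  have "h \<circ> r \<in> end_action h x" unfolding end_action_def using ray_self[OF ray] by blast
  then have "h \<circ> r \<in> x" using h(2) by simp
  then show ?thesis using class_fix[OF t ray th] h(3) by blast
qed

lemma Kr_sgp: "sgp E Kr"
proof -
  have "Kr = G \<inter> {h. \<forall>v\<in>range r. h v = v}" unfolding Kr_def by auto
  then show ?thesis using sgp_fix[OF sgG, of "range r"] by (simp only:)
qed

lemma Kr_Gx: "Kr \<subseteq> Gx"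
proof
  fix h assume h: "h \<in> Kr"
  then have "h \<in> G" "\<And>n. h (r n) = r n" unfolding Kr_def by auto
  moreover have "tree_aut E h" using sgpD(1)[OF sgG] calculation(1) .
  ultimately show "h \<in> Gx" unfolding end_stabilizer_def using fix_ray_stab[OF _ ray] by blast
qed

lemma Kr_compact: "compactin (aut_top E) Kr"
  unfolding Kr_def using compact_fix[OF t lf cs, of "r 0" "range r"] by simp

lemma conjinv_Kr: "h \<in> Kr \<Longrightarrow> hinv (g ^^ n) \<circ> h \<circ> (g ^^ n) \<in> Kr"
proof -
  assume h: "h \<in> Kr"
  then have hG: "h \<in> G" and hf: "\<And>m. h (r m) = r m" unfolding Kr_def by auto
  have "hinv (g ^^ n) \<circ> h \<circ> (g ^^ n) \<in> G"
    using sgpD(3,4)[OF sgG] gnG hG by blast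
  moreover have "(hinv (g ^^ n) \<circ> h \<circ> (g ^^ n)) (r m) = r m" for m
    using gnr hf gnir by simp
  ultimately show ?thesis unfolding Kr_def by auto
qed

lemma conj_back: "tree_aut E h \<Longrightarrow> h = (g ^^ n) \<circ> (hinv (g ^^ n) \<circ> h \<circ> (g ^^ n)) \<circ> hinv (g ^^ n)"
  using tgn[of n] by (auto simp: fun_eq_iff)

lemma i_ii:
  assumes op: "openin (subtopology (aut_top E) G) Gx"
  shows "\<exists>K. compact_open_subgroup E G K \<and> (\<forall>n. K \<subseteq> conj_pow E g n K)"
proof (intro exI conjI allI)
  obtain F where F: "finite F" "\<forall>h\<in>G. (\<forall>v\<in>F. h v = v) \<longrightarrow> h \<in> Gx"
    using fix_from_open[OF cs op] sgpD(2)[OF Gx_sgp] by blast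
  have sub: "subgroup Kr (aut_group E)"
    using Kr_sgp unfolding sgp_def by (intro subgroupI_aut) auto
  have KG: "Kr \<subseteq> G" unfolding Kr_def by auto
  have "openin (subtopology (aut_top E) G) Kr"
  proof (rule open_from_fix[OF cs KG])
    show "\<And>a b. a \<in> Kr \<Longrightarrow> b \<in> Kr \<Longrightarrow> a \<circ> b \<in> Kr" using sgpD(3)[OF Kr_sgp] .
    show "finite (insert (r 0) F)" using F(1) by simp
    fix h assume h: "h \<in> G" "\<forall>v\<in>insert (r 0) F. h v = v"
    then have "h \<in> Gx" using F(2) by auto
    then have "h (r n) = r n" for n using Gx_fix_ray h unfolding end_stabilizer_def by auto
    then show "h \<in> Kr" using h(1) unfolding Kr_def by auto
  qed
  then show "compact_open_subgroup E G Kr"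
    unfolding compact_open_subgroup_def using sub KG Kr_compact by blast
  fix n
  show "Kr \<subseteq> conj_pow E g n Kr"
  proof
    fix h assume h: "h \<in> Kr"
    then have "tree_aut E h" using sgpD(1)[OF Kr_sgp] by blast
    then have "h = (g ^^ n) \<circ> (hinv (g ^^ n) \<circ> h \<circ> (g ^^ n)) \<circ> hinv (g ^^ n)" by (rule conj_back)
    then show "h \<in> conj_pow E g n Kr" unfolding conj_eq using conjinv_Kr[OF h] by blast
  qed
qed

lemma ii_iii:
  assumes "\<exists>K. compact_open_subgroup E G K \<and> (\<forall>n. K \<subseteq> conj_pow E g n K)"
  shows "\<exists>K. compact_open_subgroup E G K \<and> (\<exists>B. \<forall>n. sg_index E K (K \<inter> conj_pow E g n K) \<le> B)"
proof -
  obtain K where K: "compact_open_subgroup E G K" "\<And>n. K \<subseteq> conj_pow E g n K" using assms by blast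
  have sK: "sgp E K" using K(1) sgp_subgroup unfolding compact_open_subgroup_def by blast
  have "sg_index E K (K \<inter> conj_pow E g n K) \<le> 1" for n
  proof -
    have "K \<inter> conj_pow E g n K = K" using K(2)[of n] by blast
    then show ?thesis by (simp add: sg_index_rc rc_self[OF sK])
  qed
  then show ?thesis using K(1) by blast
qed

definition "K0 = {h\<in>G. \<forall>v\<in>{r 0}. h v = v}"

lemma K0_cos: "compact_open_subgroup E G K0"
proof -
  have "K0 = G \<inter> {h. \<forall>v\<in>{r 0}. h v = v}" unfolding K0_def by auto
  then have s: "sgp E K0" using sgp_fix[OF sgG, of "{r 0}"] by (simp only:)
  have sub: "subgroup K0 (aut_group E)"
    using s unfolding sgp_def by (intro subgroupI_aut) auto
  have KG: "K0 \<subseteq> G" unfolding K0_def by auto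
  have "openin (subtopology (aut_top E) G) K0"
    by (rule open_from_fix[OF cs KG sgpD(3)[OF s], of "{r 0}"]) (auto simp: K0_def)
  moreover have "compactin (aut_top E) K0" unfolding K0_def by (rule compact_fix[OF t lf cs]) simp
  ultimately show ?thesis unfolding compact_open_subgroup_def using sub KG by blast
qed

lemma iv_iii:
  assumes "\<forall>K. compact_open_subgroup E G K \<longrightarrow> (\<exists>B. \<forall>n. sg_index E K (K \<inter> conj_pow E g n K) \<le> B)"
  shows "\<exists>K. compact_open_subgroup E G K \<and> (\<exists>B. \<forall>n. sg_index E K (K \<inter> conj_pow E g n K) \<le> B)"
  using assms K0_cos by blast

end

context setting begin

lemma cos_facts:
  assumes L: "compact_open_subgroup E G L"
  shows "sgp E L" "L \<subseteq> G" "compactin (aut_top E) L" "openin (subtopology (aut_top E) G) L"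
    "\<And>u. finite (orb L u)"
proof -
  show "sgp E L" using L sgp_subgroup unfolding compact_open_subgroup_def by blast
  show "L \<subseteq> G" using L unfolding compact_open_subgroup_def by blast
  show c: "compactin (aut_top E) L" using L unfolding compact_open_subgroup_def by blast
  show "openin (subtopology (aut_top E) G) L" using L unfolding compact_open_subgroup_def by blast
  show "\<And>u. finite (orb L u)" using orbit_finite[OF c] .
qed

lemma idx_conj_bound:
  assumes L: "compact_open_subgroup E G L"
  shows "\<exists>F. finite F \<and> (\<forall>n. finite (rc (L \<inter> cj n L) L) \<and>
           card (rc (L \<inter> cj n L) L) \<le> (\<Prod>u\<in>F. card (orb L ((g ^^ n) u))))"
proof -
  note LF = cos_facts[OF L]
  obtain F where F: "finite F" "\<forall>h\<in>G. (\<forall>v\<in>F. h v = v) \<longrightarrow> h \<in> L"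
    using fix_from_open[OF cs LF(4)] sgpD(2)[OF LF(1)] by blast
  have "finite (rc (L \<inter> cj n L) L) \<and>
           card (rc (L \<inter> cj n L) L) \<le> (\<Prod>u\<in>F. card (orb L ((g ^^ n) u)))" for n
  proof -
    let ?F' = "(g ^^ n) ` F"
    let ?H' = "L \<inter> {h. \<forall>v\<in>?F'. h v = v}"
    have s1: "sgp E (L \<inter> cj n L)" using sgp_Int[OF LF(1) sgp_conj[OF LF(1) tgn]] .
    have s2: "sgp E ?H'" using sgp_fix[OF LF(1)] .
    have sub: "?H' \<subseteq> L \<inter> cj n L"
    proof
      fix h assume h: "h \<in> ?H'"
      then have hL: "h \<in> L" and hG: "h \<in> G" using LF(2) by auto
      have th: "tree_aut E h" using sgpD(1)[OF LF(1) hL] .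
      let ?k0 = "hinv (g ^^ n) \<circ> h \<circ> (g ^^ n)"
      have "?k0 \<in> G" using sgpD(3,4)[OF sgG] gnG hG by blast
      moreover have "\<forall>v\<in>F. ?k0 v = v"
      proof
        fix v assume "v \<in> F"
        then have "h ((g ^^ n) v) = (g ^^ n) v" using h by auto
        then show "?k0 v = v" using inv_comp_self[OF tgn, of n v] by simp
      qed
      ultimately have "?k0 \<in> L" using F(2) by blast
      moreover have "h = (g ^^ n) \<circ> ?k0 \<circ> hinv (g ^^ n)" using conj_back[OF th] .
      ultimately show "h \<in> L \<inter> cj n L" using hL by blast
    qed
    have fF': "finite ?F'" using F(1) by simp
    have b1: "card (rc ?H' L) \<le> (\<Prod>u\<in>?F'. card (orb L u))" "finite (rc ?H' L)"
      using idx_fix_bound[OF LF(1) fF' LF(5)] by blast+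
    have b2: "card (rc (L \<inter> cj n L) L) \<le> card (rc ?H' L)" "finite (rc (L \<inter> cj n L) L)"
      using idx_mono[OF s1 s2 sub b1(2)] by blast+
    have inj: "inj_on (g ^^ n) F" using bij_is_inj[OF tree_aut_bij[OF tgn]] by (rule inj_on_subset) simp
    have "(\<Prod>u\<in>?F'. card (orb L u)) = (\<Prod>u\<in>F. card (orb L ((g ^^ n) u)))"
      by (simp only: prod.reindex[OF inj] comp_def)
    then show ?thesis using b1 b2 by simp
  qed
  then show ?thesis using F(1) by blast
qed

end

context setting begin

lemma orb_cj: "orb (cj n K) (r (n * k)) = (g ^^ n) ` orb K (r 0)"
proof -
  have e: "hinv (g ^^ n) (r (n * k)) = r 0" using gnir[where m=0 and n=n] by simp
  have "orb (cj n K) (r (n * k)) = (\<lambda>h. (g ^^ n) (h (hinv (g ^^ n) (r (n * k))))) ` K"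
    by (simp add: image_image)
  also have "\<dots> = (\<lambda>h. (g ^^ n) (h (r 0))) ` K" by (simp only: e)
  also have "\<dots> = (g ^^ n) ` orb K (r 0)" by (simp add: image_image)
  finally show ?thesis .
qed

lemma iii_i:
  assumes K: "compact_open_subgroup E G K" and B: "\<And>n. sg_index E K (K \<inter> conj_pow E g n K) \<le> B"
  shows "openin (subtopology (aut_top E) G) Gx"
proof -
  note KF = cos_facts[OF K]
  obtain FK where FK: "finite FK" "\<forall>h\<in>G. (\<forall>v\<in>FK. h v = v) \<longrightarrow> h \<in> K"
    using fix_from_open[OF cs KF(4)] sgpD(2)[OF KF(1)] by blast
  obtain Fi where Fi: "\<And>n. finite (rc (K \<inter> cj n K) K)" using idx_conj_bound[OF K] by blast
  define c where "c = card (orb K (r 0))"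
  have bound1: "card (orb K (r (n * k))) \<le> B * c" for n
  proof -
    have s1: "sgp E (K \<inter> cj n K)" using sgp_Int[OF KF(1) sgp_conj[OF KF(1) tgn]] .
    have d: "card (orb K (r (n * k))) \<le> card (rc (K \<inter> cj n K) K) * card (orb (K \<inter> cj n K) (r (n * k)))"
      by (rule orbit_decomp[OF KF(1) s1 _ Fi]) blast
    have i1: "card (rc (K \<inter> cj n K) K) \<le> B" using B[of n] by (simp add: sg_index_rc conj_eq)
    have f2: "finite (orb (cj n K) (r (n * k)))" unfolding orb_cj using KF(5) by simp
    have "card (orb (K \<inter> cj n K) (r (n * k))) \<le> card (orb (cj n K) (r (n * k)))"
      by (rule card_mono[OF f2]) blast
    also have "\<dots> \<le> c" unfolding orb_cj c_def using card_image_le[OF KF(5)] .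
    finally have "card (orb (K \<inter> cj n K) (r (n * k))) \<le> c" .
    then have "card (rc (K \<inter> cj n K) K) * card (orb (K \<inter> cj n K) (r (n * k))) \<le> B * c"
      by (rule mult_le_mono[OF i1])
    then show ?thesis using d by linarith
  qed
  define K' where "K' = K \<inter> {h. \<forall>v\<in>{r 0}. h v = v}"
  have sK': "sgp E K'" unfolding K'_def using sgp_fix[OF KF(1)] .
  have K'K: "K' \<subseteq> K" unfolding K'_def by blast
  have finK': "finite (orb K' u)" for u using finite_subset[OF image_mono[OF K'K] KF(5)] .
  have fac: "h (r m) = h' (r m)"
    if hh: "h \<in> K'" "h' \<in> K'" "h (r m') = h' (r m')" and mm: "m \<le> m'" for h h' m m'
  proof -
    have th: "tree_aut E h" and th': "tree_aut E h'" using hh sgpD(1)[OF sK'] by auto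
    let ?q = "hinv h' \<circ> h"
    have tq: "tree_aut E ?q" using tree_aut_comp[OF tree_aut_inv[OF th'] th] .
    have "h (r 0) = r 0" "h' (r 0) = r 0" using hh unfolding K'_def by auto
    then have q0: "?q (r 0) = r 0" using inv_comp_self[OF th', of "r 0"] by simp
    have qm: "?q (r m') = r m'" using hh(3) inv_comp_self[OF th', of "r m'"] by simp
    have "?q (r m) = r m" using geodesic_fix[OF t ray tq q0 qm mm] .
    then have "h' (?q (r m)) = h' (r m)" by simp
    then show ?thesis using comp_inv_self[OF th'] by simp
  qed
  have mono: "card (orb K' (r m)) \<le> card (orb K' (r m'))" if mm: "m \<le> m'" for m m'
  proof -
    have fac': "\<And>a b. a \<in> K' \<Longrightarrow> b \<in> K' \<Longrightarrow> a (r m') = b (r m') \<Longrightarrow> a (r m) = b (r m)"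
      using fac mm by blast
    show ?thesis
    proof (rule card_image_factor(1)[where f="\<lambda>h. h (r m)" and g="\<lambda>h. h (r m')" and A=K', OF finK'[of "r m'"]])
      fix a b assume "a \<in> K'" "b \<in> K'" "a (r m') = b (r m')"
      then show "a (r m) = b (r m)" by (rule fac')
    qed
  qed
  have bound2: "card (orb K' (r m)) \<le> B * c" for m
  proof -
    have "m \<le> m * k" using kpos by simp
    then have "card (orb K' (r m)) \<le> card (orb K' (r (m * k)))" by (rule mono)
    also have "\<dots> \<le> card (orb K (r (m * k)))" by (rule card_mono[OF KF(5) image_mono[OF K'K]])
    also have "\<dots> \<le> B * c" by (rule bound1)
    finally show ?thesis .
  qed
  define S where "S = (\<lambda>m. card (orb K' (r m))) ` UNIV"
  have "S \<subseteq> {..B * c}" unfolding S_def using bound2 by blast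
  then have finS: "finite S" using finite_subset by blast
  have "S \<noteq> {}" unfolding S_def by simp
  then have "Max S \<in> S" using finS by (rule Max_in[rotated])
  then obtain M where M: "Max S = card (orb K' (r M))" unfolding S_def by (rule imageE)
  have Mmax: "card (orb K' (r m)) \<le> card (orb K' (r M))" for m
  proof -
    have "card (orb K' (r m)) \<in> S" unfolding S_def by (rule rangeI)
    then show ?thesis using Max_ge[OF finS] M by metis
  qed
  have fixclaim: "h (r m) = r m" if h: "h \<in> K'" "h (r M) = r M" for h m
  proof (cases "M \<le> m")
    case True
    have eqc: "card (orb K' (r M)) = card (orb K' (r m))" using mono[OF True] Mmax[of m] by simp
    have "h (r m) = id (r m)"
    proof (rule card_image_factor_inj[where f="\<lambda>h. h (r M)" and g="\<lambda>h. h (r m)" and A=K', OF finK'[of "r m"] _ eqc])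
      show "\<And>a b. a \<in> K' \<Longrightarrow> b \<in> K' \<Longrightarrow> a (r m) = b (r m) \<Longrightarrow> a (r M) = b (r M)"
        by (rule fac[OF _ _ _ True])
      show "h \<in> K'" "id \<in> K'" using h sgpD(2)[OF sK'] by auto
      show "h (r M) = id (r M)" using h by simp
    qed
    then show ?thesis by simp
  next
    case False
    have th: "tree_aut E h" using h sgpD(1)[OF sK'] by auto
    have "h (r 0) = r 0" using h unfolding K'_def by auto
    then show ?thesis using geodesic_fix[OF t ray th _ h(2)] False by simp
  qed
  show ?thesis
  proof (rule open_from_fix[OF cs _ sgpD(3)[OF Gx_sgp]])
    show "Gx \<subseteq> G" unfolding end_stabilizer_def by blast
    show "finite (insert (r 0) (insert (r M) FK))" using FK(1) by simp
    fix h assume h: "h \<in> G" "\<forall>v\<in>insert (r 0) (insert (r M) FK). h v = v"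
    then have "h \<in> K" using FK(2) by auto
    then have hK': "h \<in> K'" using h(2) unfolding K'_def by auto
    have "h (r m) = r m" for m using fixclaim[OF hK'] h(2) by auto
    moreover have "tree_aut E h" using sgpD(1)[OF sgG h(1)] .
    ultimately have "end_action h x = x" using fix_ray_stab[OF _ ray] by blast
    then show "h \<in> Gx" using h(1) unfolding end_stabilizer_def by blast
  qed
qed

end

context setting begin

lemma i_iv:
  assumes op: "openin (subtopology (aut_top E) G) Gx" and L: "compact_open_subgroup E G L"
  shows "\<exists>B. \<forall>n. sg_index E L (L \<inter> conj_pow E g n L) \<le> B"
proof -
  note LF = cos_facts[OF L]
  obtain F1 where F1: "finite F1" "\<forall>h\<in>G. (\<forall>v\<in>F1. h v = v) \<longrightarrow> h \<in> Gx"
    using fix_from_open[OF cs op] sgpD(2)[OF Gx_sgp] by blast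
  define H where "H = L \<inter> {h. \<forall>v\<in>insert (r 0) F1. h v = v}"
  have sH: "sgp E H" unfolding H_def using sgp_fix[OF LF(1)] .
  have HL: "H \<subseteq> L" unfolding H_def by blast
  have fF: "finite (insert (r 0) F1)" using F1(1) by simp
  have fH: "finite (rc H L)" unfolding H_def by (rule idx_fix_bound(2)[OF LF(1) fF LF(5)])
  define a where "a = card (rc H L)"
  have HKr: "h \<in> Kr" if h: "h \<in> H" for h
  proof -
    have hG: "h \<in> G" using h HL LF(2) by blast
    have "h \<in> Gx" using F1(2) hG h unfolding H_def by auto
    then have "h (r n) = r n" for n using Gx_fix_ray[OF hG] h unfolding H_def end_stabilizer_def by auto
    then show ?thesis using hG unfolding Kr_def by auto
  qed
  have finKr: "finite (orb Kr u)" for u using orbit_finite[OF Kr_compact] .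
  have orbH: "card (orb H ((g ^^ n) u)) \<le> card (orb Kr u)" for n u
  proof -
    have "orb H ((g ^^ n) u) \<subseteq> (g ^^ n) ` orb Kr u"
    proof
      fix z assume "z \<in> orb H ((g ^^ n) u)"
      then obtain h where h: "h \<in> H" "z = h ((g ^^ n) u)" by blast
      let ?k0 = "hinv (g ^^ n) \<circ> h \<circ> (g ^^ n)"
      have "?k0 \<in> Kr" using conjinv_Kr[OF HKr[OF h(1)]] .
      moreover have "z = (g ^^ n) (?k0 u)" using h(2) comp_inv_self[OF tgn] by simp
      ultimately show "z \<in> (g ^^ n) ` orb Kr u" by blast
    qed
    then have "card (orb H ((g ^^ n) u)) \<le> card ((g ^^ n) ` orb Kr u)"
      using card_mono finite_imageI[OF finKr] by blast
    also have "\<dots> \<le> card (orb Kr u)" using card_image_le[OF finKr] .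
    finally show ?thesis .
  qed
  have orbL: "card (orb L ((g ^^ n) u)) \<le> a * card (orb Kr u)" for n u
  proof -
    have "card (orb L ((g ^^ n) u)) \<le> card (rc H L) * card (orb H ((g ^^ n) u))"
      by (rule orbit_decomp[OF LF(1) sH HL fH])
    also have "\<dots> \<le> a * card (orb Kr u)" unfolding a_def using orbH by (rule mult_le_mono2)
    finally show ?thesis .
  qed
  obtain FL where FL: "finite FL" "\<And>n. card (rc (L \<inter> cj n L) L) \<le> (\<Prod>u\<in>FL. card (orb L ((g ^^ n) u)))"
    using idx_conj_bound[OF L] by blast
  have "sg_index E L (L \<inter> conj_pow E g n L) \<le> (\<Prod>u\<in>FL. a * card (orb Kr u))" for n
  proof -
    have "sg_index E L (L \<inter> conj_pow E g n L) = card (rc (L \<inter> cj n L) L)"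
      by (simp add: sg_index_rc conj_eq)
    also have "\<dots> \<le> (\<Prod>u\<in>FL. card (orb L ((g ^^ n) u)))" by (rule FL(2))
    also have "\<dots> \<le> (\<Prod>u\<in>FL. a * card (orb Kr u))" by (rule prod_mono) (simp add: orbL)
    finally show ?thesis .
  qed
  then show ?thesis by blast
qed

lemma main:
  shows "(openin (subtopology (aut_top E) G) (end_stabilizer G x)
           \<longleftrightarrow> (\<exists>K. compact_open_subgroup E G K \<and> (\<forall>n. K \<subseteq> conj_pow E g n K)))
       \<and> ((\<exists>K. compact_open_subgroup E G K \<and> (\<forall>n. K \<subseteq> conj_pow E g n K))
           \<longleftrightarrow> (\<exists>K. compact_open_subgroup E G K \<and>
                  (\<exists>B. \<forall>n. sg_index E K (K \<inter> conj_pow E g n K) \<le> B)))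
       \<and> ((\<exists>K. compact_open_subgroup E G K \<and>
                  (\<exists>B. \<forall>n. sg_index E K (K \<inter> conj_pow E g n K) \<le> B))
           \<longleftrightarrow> (\<forall>K. compact_open_subgroup E G K \<longrightarrow>
                  (\<exists>B. \<forall>n. sg_index E K (K \<inter> conj_pow E g n K) \<le> B)))"
proof -
  have iii_i': "openin (subtopology (aut_top E) G) Gx"
    if "\<exists>K. compact_open_subgroup E G K \<and> (\<exists>B. \<forall>n. sg_index E K (K \<inter> conj_pow E g n K) \<le> B)"
    using that iii_i by blast
  have i_iv': "\<forall>K. compact_open_subgroup E G K \<longrightarrow> (\<exists>B. \<forall>n. sg_index E K (K \<inter> conj_pow E g n K) \<le> B)"
    if "openin (subtopology (aut_top E) G) Gx" using that i_iv by blast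
  show ?thesis using i_ii ii_iii iii_i' i_iv' iv_iii by blast
qed

end

theorem proposition3p2:
  fixes E :: "'v \<Rightarrow> 'v \<Rightarrow> bool" and G :: "('v \<Rightarrow> 'v) set"
    and g :: "'v \<Rightarrow> 'v" and x :: "(nat \<Rightarrow> 'v) set"
  assumes "is_tree E" and "locally_finite E"
    and "closed_subgroup E G"
    and "g \<in> G" and "hyperbolic E g"
    and "attracting_end E g x"
  shows "(openin (subtopology (aut_top E) G) (end_stabilizer G x)
           \<longleftrightarrow> (\<exists>K. compact_open_subgroup E G K \<and> (\<forall>n. K \<subseteq> conj_pow E g n K)))
       \<and> ((\<exists>K. compact_open_subgroup E G K \<and> (\<forall>n. K \<subseteq> conj_pow E g n K))
           \<longleftrightarrow> (\<exists>K. compact_open_subgroup E G K \<and>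
                  (\<exists>B. \<forall>n. sg_index E K (K \<inter> conj_pow E g n K) \<le> B)))
       \<and> ((\<exists>K. compact_open_subgroup E G K \<and>
                  (\<exists>B. \<forall>n. sg_index E K (K \<inter> conj_pow E g n K) \<le> B))
           \<longleftrightarrow> (\<forall>K. compact_open_subgroup E G K \<longrightarrow>
                  (\<exists>B. \<forall>n. sg_index E K (K \<inter> conj_pow E g n K) \<le> B)))"
  proof -
  obtain r k where r: "is_ray E r" "x = ray_class E r" "k > 0" "\<forall>n. g (r n) = r (n + k)"
    using assms(6) unfolding attracting_end_def by blast
  have "setting E G g r k"
    by (unfold_locales) (use assms r in auto)
  from setting.main[OF this] show ?thesis using r(2) by simp
qed

end
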